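(* Let $V$ be a finite set and $d$ a metric on $V$ (nonnegative, symmetric, satisfying the triangle inequality). For a rooted binary tree $T$ whose leaves are in bijection with $V$, let $R_T(V)=\sum_{\{i,j\}\subseteq V}d(i,j)\,|\mathrm{leaves}(T[i\vee j])|$. Then for every such tree $T$, $R_T(V)\ge\frac12\max_{T'}R_{T'}(V)$, the maximum being over all such trees $T'$.
   Context: $T[i\vee j]$ denotes the subtree of $T$ rooted at the least common ancestor of the leaves $i$ and $j$, and $|\mathrm{leaves}(T[i\vee j])|$ is its number of leaves. The sum is over unordered pairs of distinct elements. *)

theory Defs
  imports Complex_Main
begin

datatype 'a btree = Leaf 'a | Node "'a btree" "'a btree"

fun leaves :: "'a btree \<Rightarrow> 'a list" where
  "leaves (Leaf a) = [a]"
| "leaves (Node l r) = leaves l @ leaves r"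

definition tree_on :: "'a set \<Rightarrow> 'a btree \<Rightarrow> bool" where
  "tree_on V T \<longleftrightarrow> distinct (leaves T) \<and> set (leaves T) = V"

fun lca_leaves :: "'a btree \<Rightarrow> 'a \<Rightarrow> 'a \<Rightarrow> nat" where
  "lca_leaves (Leaf a) i j = 1"
| "lca_leaves (Node l r) i j =
     (if i \<in> set (leaves l) \<and> j \<in> set (leaves l) then lca_leaves l i j
      else if i \<in> set (leaves r) \<and> j \<in> set (leaves r) then lca_leaves r i j
      else length (leaves (Node l r)))"

text \<open>R_T(V): sum over unordered pairs {i,j} of distinct elements, written as half the
  sum over ordered pairs (the summand is symmetric).\<close>
definition revenue :: "('a \<Rightarrow> 'a \<Rightarrow> real) \<Rightarrow> 'a set \<Rightarrow> 'a btree \<Rightarrow> real" where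
  "revenue d V T = (1/2) * (\<Sum>(i,j) \<in> {(i,j). i \<in> V \<and> j \<in> V \<and> i \<noteq> j}.
                        d i j * real (lca_leaves T i j))"

end

theory Submission
  imports Defs
begin

lemma len_pos: "length (leaves t) \<ge> 1"
  by (induct t) auto

lemma lca_le: "lca_leaves t i j \<le> length (leaves t)"
  by (induct t) auto

lemma finite_trees: "finite V \<Longrightarrow> finite {t. set (leaves t) \<subseteq> V \<and> length (leaves t) \<le> n}"
proof (induct n)
  case 0
  have "leaves t \<noteq> []" for t :: "'a btree" by (induct t) auto
  then show ?case by simp
next
  case (Suc n)
  let ?B = "{t. set (leaves t) \<subseteq> V \<and> length (leaves t) \<le> n}"
  have "{t. set (leaves t) \<subseteq> V \<and> length (leaves t) \<le> Suc n} \<subseteq> Leaf ` V \<union> (\<lambda>(l,r). Node l r) ` (?B \<times> ?B)"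
  proof
    fix t assume t: "t \<in> {t. set (leaves t) \<subseteq> V \<and> length (leaves t) \<le> Suc n}"
    show "t \<in> Leaf ` V \<union> (\<lambda>(l,r). Node l r) ` (?B \<times> ?B)"
    proof (cases t)
      case (Leaf a) then show ?thesis using t by auto
    next
      case (Node l r)
      have "length (leaves l) \<ge> 1" "length (leaves r) \<ge> 1" by (rule len_pos)+
      then have "l \<in> ?B" "r \<in> ?B" using t Node by auto
      then show ?thesis using Node by auto
    qed
  qed
  moreover have "finite (Leaf ` V \<union> (\<lambda>(l,r). Node l r) ` (?B \<times> ?B))"
    using Suc by auto
  ultimately show ?case by (rule finite_subset)
qed

lemma sum4:
  assumes "finite L" "finite R" "L \<inter> R = {}"
  shows "(\<Sum>i\<in>L\<union>R. \<Sum>j\<in>L\<union>R. (g i j :: real)) =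
    (\<Sum>i\<in>L. \<Sum>j\<in>L. g i j) + (\<Sum>i\<in>L. \<Sum>j\<in>R. g i j) + (\<Sum>i\<in>R. \<Sum>j\<in>L. g i j) + (\<Sum>i\<in>R. \<Sum>j\<in>R. g i j)"
  using assms by (simp add: sum.union_disjoint sum.distrib)

lemma tri_sum:
  fixes e :: "'a \<Rightarrow> 'a \<Rightarrow> real"
  assumes "finite L" "finite R" "L \<union> R \<subseteq> V"
    and sym: "\<And>i j. i \<in> V \<Longrightarrow> j \<in> V \<Longrightarrow> e i j = e j i"
    and tri: "\<And>i j k. i \<in> V \<Longrightarrow> j \<in> V \<Longrightarrow> k \<in> V \<Longrightarrow> e i k \<le> e i j + e j k"
  shows "real (card R) * (\<Sum>i\<in>L. \<Sum>i'\<in>L. e i i') \<le> 2 * real (card L) * (\<Sum>i\<in>L. \<Sum>j\<in>R. e i j)"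
proof -
  have "real (card R) * (\<Sum>i\<in>L. \<Sum>i'\<in>L. e i i') = (\<Sum>i\<in>L. \<Sum>i'\<in>L. \<Sum>j\<in>R. e i i')"
    by (simp add: sum_distrib_left)
  also have "\<dots> \<le> (\<Sum>i\<in>L. \<Sum>i'\<in>L. \<Sum>j\<in>R. e i j + e i' j)"
  proof (intro sum_mono)
    fix i i' j assume "i \<in> L" "i' \<in> L" "j \<in> R"
    then have "i \<in> V" "i' \<in> V" "j \<in> V" using assms(3) by auto
    then show "e i i' \<le> e i j + e i' j" using tri[of i j i'] sym[of j i'] by simp
  qed
  also have "\<dots> = (\<Sum>i\<in>L. \<Sum>i'\<in>L. \<Sum>j\<in>R. e i j) + (\<Sum>i\<in>L. \<Sum>i'\<in>L. \<Sum>j\<in>R. e i' j)"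
    by (simp add: sum.distrib)
  also have "\<dots> = 2 * real (card L) * (\<Sum>i\<in>L. \<Sum>j\<in>R. e i j)"
    by (simp add: sum_distrib_left[symmetric])
  finally show ?thesis .
qed

lemma key:
  fixes e :: "'a \<Rightarrow> 'a \<Rightarrow> real"
  assumes nn: "\<And>i j. i \<in> V \<Longrightarrow> j \<in> V \<Longrightarrow> e i j \<ge> 0"
    and sym: "\<And>i j. i \<in> V \<Longrightarrow> j \<in> V \<Longrightarrow> e i j = e j i"
    and tri: "\<And>i j k. i \<in> V \<Longrightarrow> j \<in> V \<Longrightarrow> k \<in> V \<Longrightarrow> e i k \<le> e i j + e j k"
    and diag: "\<And>i. e i i = 0"
  shows "distinct (leaves t) \<Longrightarrow> set (leaves t) \<subseteq> V \<Longrightarrow>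
    (\<Sum>i\<in>set (leaves t). \<Sum>j\<in>set (leaves t). e i j * real (lca_leaves t i j))
      \<ge> real (length (leaves t)) / 2 * (\<Sum>i\<in>set (leaves t). \<Sum>j\<in>set (leaves t). e i j)"
proof (induct t)
  case (Leaf a)
  then show ?case by (simp add: diag)
next
  case (Node l r)
  define L where "L = set (leaves l)"
  define R where "R = set (leaves r)"
  define a where "a = length (leaves l)"
  define b where "b = length (leaves r)"
  have dl: "distinct (leaves l)" and dr: "distinct (leaves r)" and disj: "L \<inter> R = {}"
    using Node.prems by (auto simp: L_def R_def)
  have cL: "card L = a" using dl by (simp add: L_def a_def distinct_card)
  have cR: "card R = b" using dr by (simp add: R_def b_def distinct_card)
  have sub: "L \<union> R \<subseteq> V" using Node.prems by (auto simp: L_def R_def)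
  have fin: "finite L" "finite R" by (auto simp: L_def R_def)
  have IHl: "(\<Sum>i\<in>L. \<Sum>j\<in>L. e i j * real (lca_leaves l i j)) \<ge> real a / 2 * (\<Sum>i\<in>L. \<Sum>j\<in>L. e i j)"
    using Node.hyps(1) dl sub unfolding L_def a_def by auto
  have IHr: "(\<Sum>i\<in>R. \<Sum>j\<in>R. e i j * real (lca_leaves r i j)) \<ge> real b / 2 * (\<Sum>i\<in>R. \<Sum>j\<in>R. e i j)"
    using Node.hyps(2) dr sub unfolding R_def b_def by auto
  define C where "C = (\<Sum>i\<in>L. \<Sum>j\<in>R. e i j)"
  define DL where "DL = (\<Sum>i\<in>L. \<Sum>j\<in>L. e i j)"
  define DR where "DR = (\<Sum>i\<in>R. \<Sum>j\<in>R. e i j)"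
  have CC: "(\<Sum>i\<in>R. \<Sum>j\<in>L. e i j) = C"
    unfolding C_def
    by (subst sum.swap) (intro sum.cong refl, use sub sym in auto)
  have t1: "real b * DL \<le> 2 * real a * C"
    using tri_sum[OF fin sub sym tri] cL cR by (simp add: DL_def C_def)
  have t2: "real a * DR \<le> 2 * real b * C"
    using tri_sum[of R L V e, OF fin(2) fin(1) _ sym tri] sub cL cR CC by (simp add: DR_def Un_commute)
  let ?g = "\<lambda>i j. e i j * real (lca_leaves (Node l r) i j)"
  have lt: "set (leaves (Node l r)) = L \<union> R" by (simp add: L_def R_def)
  have len: "length (leaves (Node l r)) = a + b" by (simp add: a_def b_def)
  have b1: "(\<Sum>i\<in>L. \<Sum>j\<in>L. ?g i j) = (\<Sum>i\<in>L. \<Sum>j\<in>L. e i j * real (lca_leaves l i j))"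
    by (intro sum.cong refl) (simp add: L_def)
  have b4: "(\<Sum>i\<in>R. \<Sum>j\<in>R. ?g i j) = (\<Sum>i\<in>R. \<Sum>j\<in>R. e i j * real (lca_leaves r i j))"
    using disj by (intro sum.cong refl) (auto simp: L_def R_def)
  have b2: "(\<Sum>i\<in>L. \<Sum>j\<in>R. ?g i j) = real (a+b) * C"
    unfolding C_def sum_distrib_left
    using disj by (intro sum.cong refl) (auto simp: L_def R_def a_def b_def)
  have b3: "(\<Sum>i\<in>R. \<Sum>j\<in>L. ?g i j) = real (a+b) * C"
    unfolding CC[symmetric] sum_distrib_left
    using disj by (intro sum.cong refl) (auto simp: L_def R_def a_def b_def)
  have lhs: "(\<Sum>i\<in>set (leaves (Node l r)). \<Sum>j\<in>set (leaves (Node l r)). ?g i j)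
     = (\<Sum>i\<in>L. \<Sum>j\<in>L. e i j * real (lca_leaves l i j)) + 2 * real (a+b) * C
       + (\<Sum>i\<in>R. \<Sum>j\<in>R. e i j * real (lca_leaves r i j))"
    unfolding lt sum4[OF fin disj] b1 b2 b3 b4 by simp
  have rhs: "(\<Sum>i\<in>set (leaves (Node l r)). \<Sum>j\<in>set (leaves (Node l r)). e i j) = DL + 2 * C + DR"
    unfolding lt sum4[OF fin disj] CC DL_def DR_def C_def by simp
  have "real a / 2 * DL + 2 * real (a+b) * C + real b / 2 * DR \<ge> real (a + b) / 2 * (DL + 2 * C + DR)"
    using t1 t2 by (simp add: algebra_simps)
  then show ?case
    unfolding lhs rhs len using IHl IHr by (simp add: DL_def DR_def)
qed

theorem mainTheorem13:
  fixes V :: "'a set" and d :: "'a \<Rightarrow> 'a \<Rightarrow> real" and T :: "'a btree"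
  assumes "finite V"
    and "\<And>i j. i \<in> V \<Longrightarrow> j \<in> V \<Longrightarrow> d i j \<ge> 0"
    and "\<And>i j. i \<in> V \<Longrightarrow> j \<in> V \<Longrightarrow> d i j = d j i"
    and "\<And>i j k. i \<in> V \<Longrightarrow> j \<in> V \<Longrightarrow> k \<in> V \<Longrightarrow> d i k \<le> d i j + d j k"
    and "tree_on V T"
  shows "revenue d V T \<ge> (1/2) * Max (revenue d V ` {T'. tree_on V T'})"
proof -
  define e where "e i j = (if i = j then 0 else d i j)" for i j
  have nn: "\<And>i j. i \<in> V \<Longrightarrow> j \<in> V \<Longrightarrow> e i j \<ge> 0" using assms(2) by (simp add: e_def)
  have sym: "\<And>i j. i \<in> V \<Longrightarrow> j \<in> V \<Longrightarrow> e i j = e j i" using assms(3) by (simp add: e_def)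
  have tri: "\<And>i j k. i \<in> V \<Longrightarrow> j \<in> V \<Longrightarrow> k \<in> V \<Longrightarrow> e i k \<le> e i j + e j k"
    using assms(2,4) by (simp add: e_def)
  have diag: "\<And>i. e i i = 0" by (simp add: e_def)
  define n where "n = card V"
  define D where "D = (\<Sum>i\<in>V. \<Sum>j\<in>V. e i j)"
  have rev: "revenue d V T' = 1/2 * (\<Sum>i\<in>V. \<Sum>j\<in>V. e i j * real (lca_leaves T' i j))" for T'
  proof -
    have "(\<Sum>(i,j) \<in> {(i,j). i \<in> V \<and> j \<in> V \<and> i \<noteq> j}. d i j * real (lca_leaves T' i j))
        = (\<Sum>(i,j) \<in> V \<times> V. e i j * real (lca_leaves T' i j))"
      by (rule sum.mono_neutral_cong_left) (auto simp: assms(1) e_def)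
    also have "\<dots> = (\<Sum>i\<in>V. \<Sum>j\<in>V. e i j * real (lca_leaves T' i j))"
      by (simp add: sum.cartesian_product)
    finally show ?thesis by (simp add: revenue_def)
  qed
  have up: "revenue d V T' \<le> 1/2 * (real n * D)" if "tree_on V T'" for T'
  proof -
    have ln: "length (leaves T') = n" using that by (simp add: tree_on_def n_def distinct_card[symmetric])
    have "(\<Sum>i\<in>V. \<Sum>j\<in>V. e i j * real (lca_leaves T' i j)) \<le> (\<Sum>i\<in>V. \<Sum>j\<in>V. e i j * real n)"
    proof (intro sum_mono)
      fix i j assume "i \<in> V" "j \<in> V"
      then show "e i j * real (lca_leaves T' i j) \<le> e i j * real n"
        using nn lca_le[of T' i j] ln by (intro mult_left_mono) auto
    qed
    also have "\<dots> = real n * D" by (simp add: D_def sum_distrib_left sum_distrib_right mult.commute)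
    finally show ?thesis using rev by simp
  qed
  have lo: "revenue d V T \<ge> 1/2 * (real n / 2 * D)"
  proof -
    have "distinct (leaves T)" "set (leaves T) = V" "length (leaves T) = n"
      using assms(5) by (auto simp: tree_on_def n_def distinct_card[symmetric])
    have k: "(\<Sum>i\<in>set (leaves T). \<Sum>j\<in>set (leaves T). e i j * real (lca_leaves T i j))
      \<ge> real (length (leaves T)) / 2 * (\<Sum>i\<in>set (leaves T). \<Sum>j\<in>set (leaves T). e i j)"
      apply (rule key[where V=V])
           apply (fact nn)
          apply (fact sym)
         apply (fact tri)
        apply (fact diag)
       apply (fact \<open>distinct (leaves T)\<close>)
      using \<open>set (leaves T) = V\<close> by simp
    then show ?thesis using rev[of T] \<open>set (leaves T) = V\<close> \<open>length (leaves T) = n\<close> by (simp add: D_def)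
  qed
  have fin: "finite (revenue d V ` {T'. tree_on V T'})"
  proof -
    have "{T'. tree_on V T'} \<subseteq> {t. set (leaves t) \<subseteq> V \<and> length (leaves t) \<le> n}"
      by (auto simp: tree_on_def n_def distinct_card[symmetric])
    then show ?thesis using finite_trees[OF assms(1), of n] finite_subset by blast
  qed
  have ne: "revenue d V ` {T'. tree_on V T'} \<noteq> {}" using assms(5) by auto
  obtain T' where "tree_on V T'" "Max (revenue d V ` {T'. tree_on V T'}) = revenue d V T'"
    using Max_in[OF fin ne] by auto
  then show ?thesis using up[of T'] lo by simp
qed

end
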